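(* Let $H\ge1$, $d_0=d_x$, $d_{H+1}=d_y$, and widths $d_1,\dots,d_H$ with $d_j\ge\min\{d_x,d_y\}$ for all $j$. For $W_j\in\mathbb{R}^{d_j\times d_{j-1}}$, $j\in[H+1]$, write $W_{H+1:1}=W_{H+1}W_H\cdots W_1$. Let $\ell_0:\mathbb{R}^{d_y\times d_x}\to\mathbb{R}$ be differentiable and assume every critical point of $\ell_0$ is a global minimum (resp. global maximum) of $\ell_0$. Define $\ell((W_j)_{j=1}^{H+1})=\ell_0(W_{H+1:1})$. Then for any critical point $(\hat W_j)_{j=1}^{H+1}$ of $\ell$: if $\nabla\ell_0(\hat W_{H+1:1})\ne0$ then $(\hat W_j)_{j=1}^{H+1}$ is a saddle point of $\ell$, and if $\nabla\ell_0(\hat W_{H+1:1})=0$ then $(\hat W_j)_{j=1}^{H+1}$ is a global minimum (resp. global maximum) of $\ell$.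
   Context: A saddle point is a critical point that is neither a local minimum nor a local maximum. $[a]=\{1,\dots,a\}$. *)

theory Defs
  imports Complex_Main
begin

definition sp :: "'i set \<Rightarrow> ('i \<Rightarrow> real) set" where
  "sp I = {x. \<forall>a. a \<notin> I \<longrightarrow> x a = 0}"

definition ip :: "'i set \<Rightarrow> ('i \<Rightarrow> real) \<Rightarrow> ('i \<Rightarrow> real) \<Rightarrow> real" where
  "ip I x y = (\<Sum>a\<in>I. x a * y a)"

definition nrm :: "'i set \<Rightarrow> ('i \<Rightarrow> real) \<Rightarrow> real" where
  "nrm I x = sqrt (ip I x x)"

definition has_grad :: "'i set \<Rightarrow> (('i \<Rightarrow> real) \<Rightarrow> real) \<Rightarrow> ('i \<Rightarrow> real) \<Rightarrow> ('i \<Rightarrow> real) \<Rightarrow> bool" where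
  "has_grad I f x g \<longleftrightarrow> g \<in> sp I \<and>
     (\<forall>e>0. \<exists>\<delta>>0. \<forall>y\<in>sp I. nrm I (y - x) < \<delta> \<longrightarrow>
        \<bar>f y - f x - ip I g (y - x)\<bar> \<le> e * nrm I (y - x))"

definition differentiable_at_sp :: "'i set \<Rightarrow> (('i \<Rightarrow> real) \<Rightarrow> real) \<Rightarrow> ('i \<Rightarrow> real) \<Rightarrow> bool" where
  "differentiable_at_sp I f x \<longleftrightarrow> (\<exists>g. has_grad I f x g)"

definition grad :: "'i set \<Rightarrow> (('i \<Rightarrow> real) \<Rightarrow> real) \<Rightarrow> ('i \<Rightarrow> real) \<Rightarrow> ('i \<Rightarrow> real)" where
  "grad I f x = (THE g. has_grad I f x g)"

definition critical :: "'i set \<Rightarrow> (('i \<Rightarrow> real) \<Rightarrow> real) \<Rightarrow> ('i \<Rightarrow> real) \<Rightarrow> bool" where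
  "critical I f x \<longleftrightarrow> x \<in> sp I \<and> has_grad I f x (\<lambda>_. 0)"

definition local_min :: "'i set \<Rightarrow> (('i \<Rightarrow> real) \<Rightarrow> real) \<Rightarrow> ('i \<Rightarrow> real) \<Rightarrow> bool" where
  "local_min I f x \<longleftrightarrow> x \<in> sp I \<and>
     (\<exists>\<delta>>0. \<forall>y\<in>sp I. nrm I (y - x) < \<delta> \<longrightarrow> f x \<le> f y)"

definition local_max :: "'i set \<Rightarrow> (('i \<Rightarrow> real) \<Rightarrow> real) \<Rightarrow> ('i \<Rightarrow> real) \<Rightarrow> bool" where
  "local_max I f x \<longleftrightarrow> x \<in> sp I \<and>
     (\<exists>\<delta>>0. \<forall>y\<in>sp I. nrm I (y - x) < \<delta> \<longrightarrow> f y \<le> f x)"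

definition saddle :: "'i set \<Rightarrow> (('i \<Rightarrow> real) \<Rightarrow> real) \<Rightarrow> ('i \<Rightarrow> real) \<Rightarrow> bool" where
  "saddle I f x \<longleftrightarrow> critical I f x \<and> \<not> local_min I f x \<and> \<not> local_max I f x"

definition global_min :: "'i set \<Rightarrow> (('i \<Rightarrow> real) \<Rightarrow> real) \<Rightarrow> ('i \<Rightarrow> real) \<Rightarrow> bool" where
  "global_min I f x \<longleftrightarrow> x \<in> sp I \<and> (\<forall>y\<in>sp I. f x \<le> f y)"

definition global_max :: "'i set \<Rightarrow> (('i \<Rightarrow> real) \<Rightarrow> real) \<Rightarrow> ('i \<Rightarrow> real) \<Rightarrow> bool" where
  "global_max I f x \<longleftrightarrow> x \<in> sp I \<and> (\<forall>y\<in>sp I. f y \<le> f x)"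

text \<open>Matrices: an m x n real matrix is an element of sp (MI m n), entries A (i,k).\<close>
definition MI :: "nat \<Rightarrow> nat \<Rightarrow> (nat \<times> nat) set" where
  "MI m n = {(i, k). i < m \<and> k < n}"

definition idm :: "nat \<Rightarrow> (nat \<times> nat \<Rightarrow> real)" where
  "idm n = (\<lambda>(i, k). if i < n \<and> i = k then 1 else 0)"

definition mmul :: "nat \<Rightarrow> nat \<Rightarrow> nat \<Rightarrow> (nat \<times> nat \<Rightarrow> real) \<Rightarrow> (nat \<times> nat \<Rightarrow> real) \<Rightarrow> (nat \<times> nat \<Rightarrow> real)" where
  "mmul m p n A B = (\<lambda>(i, k). if i < m \<and> k < n then (\<Sum>l<p. A (i, l) * B (l, k)) else 0)"

text \<open>Parameters (W_j)_{j=1}^{H+1} with W_j of size d j x d (j-1), encoded as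
  W (j, i, k) = (W_j)_{ik}.\<close>
definition PI :: "(nat \<Rightarrow> nat) \<Rightarrow> nat \<Rightarrow> (nat \<times> nat \<times> nat) set" where
  "PI d H = {(j, i, k). 1 \<le> j \<and> j \<le> H + 1 \<and> i < d j \<and> k < d (j - 1)}"

definition layer :: "(nat \<times> nat \<times> nat \<Rightarrow> real) \<Rightarrow> nat \<Rightarrow> (nat \<times> nat \<Rightarrow> real)" where
  "layer W j = (\<lambda>(i, k). W (j, i, k))"

fun prodW :: "(nat \<Rightarrow> nat) \<Rightarrow> (nat \<times> nat \<times> nat \<Rightarrow> real) \<Rightarrow> nat \<Rightarrow> (nat \<times> nat \<Rightarrow> real)" where
  "prodW d W 0 = idm (d 0)"
| "prodW d W (Suc j) = mmul (d (Suc j)) (d j) (d 0) (layer W (Suc j)) (prodW d W j)"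

end

theory Submission
  imports Defs "HOL-Analysis.L2_Norm"
begin


lemma nrm_L2: "nrm I x = L2_set x I"
  unfolding nrm_def ip_def L2_set_def by (simp add: power2_eq_square)

lemma nrm_triangle: "nrm I (\<lambda>a. x a + y a) \<le> nrm I x + nrm I y"
  unfolding nrm_L2 by (rule L2_set_triangle_ineq)

lemma nrm_scale: "nrm I (\<lambda>a. c * x a) = \<bar>c\<bar> * nrm I x"
proof -
  have "nrm I (\<lambda>a. c * x a) = L2_set (\<lambda>a. \<bar>c\<bar> * \<bar>x a\<bar>) I"
    unfolding nrm_L2 L2_set_def by (simp add: power_mult_distrib)
  also have "\<dots> = \<bar>c\<bar> * L2_set (\<lambda>a. \<bar>x a\<bar>) I"
    by (simp add: L2_set_right_distrib)
  also have "L2_set (\<lambda>a. \<bar>x a\<bar>) I = nrm I x"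
    unfolding nrm_L2 L2_set_def by simp
  finally show ?thesis .
qed

lemma nrm_diff_tri: "nrm I (x - z) \<le> nrm I (x - y) + nrm I (y - z)"
proof -
  have "x - z = (\<lambda>a. (x - y) a + (y - z) a)" by (simp add: fun_eq_iff)
  then show ?thesis using nrm_triangle[of I "x - y" "y - z"] by simp
qed

lemma nrm_nonneg: "0 \<le> nrm I x" unfolding nrm_L2 by simp

lemma nrm_pos: "finite I \<Longrightarrow> a \<in> I \<Longrightarrow> x a \<noteq> 0 \<Longrightarrow> 0 < nrm I x"
  unfolding nrm_L2 using L2_set_eq_0_iff[of I x] L2_set_nonneg[of x I]
  by (metis less_eq_real_def)

lemma nrm_delta: "finite I \<Longrightarrow> nrm I (\<lambda>a. if a = p then c else 0) \<le> \<bar>c\<bar>"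
proof -
  assume f: "finite I"
  have "ip I (\<lambda>a. if a = p then c else 0) (\<lambda>a. if a = p then c else 0) = (if p \<in> I then c*c else 0)"
    unfolding ip_def using f by (simp add: if_distrib sum.delta cong: if_cong)
  moreover have "sqrt (c*c) = \<bar>c\<bar>" by (metis power2_eq_square real_sqrt_abs)
  ultimately show ?thesis unfolding nrm_def by auto
qed

lemma PI_finite: "finite (PI d H)"
proof -
  let ?M = "(\<Sum>j\<le>H+1. d j)"
  have "PI d H \<subseteq> {..H+1} \<times> {..<?M} \<times> {..<?M}"
  proof
    fix x assume "x \<in> PI d H"
    then obtain j i k where x: "x = (j,i,k)" "1 \<le> j" "j \<le> H+1" "i < d j" "k < d (j-1)"
      unfolding PI_def by auto
    have "d j \<le> ?M" by (rule member_le_sum) (use x in auto)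
    moreover have "d (j-1) \<le> ?M" by (rule member_le_sum) (use x in auto)
    ultimately show "x \<in> {..H+1} \<times> {..<?M} \<times> {..<?M}" using x by auto
  qed
  then show ?thesis by (rule finite_subset) auto
qed

lemma MI_finite: "finite (MI m n)"
proof -
  have "MI m n \<subseteq> {..<m} \<times> {..<n}" unfolding MI_def by auto
  then show ?thesis by (rule finite_subset) auto
qed

lemma ip_diff_left: "ip I (f - g) h = ip I f h - ip I g h"
  unfolding ip_def by (simp add: sum_subtractf left_diff_distrib)

lemma ip_scale_right: "ip I f (\<lambda>a. c * h a) = c * ip I f h"
  unfolding ip_def by (simp add: sum_distrib_left mult_ac)

lemma ip_self: "ip I h h = (nrm I h)^2"
  unfolding nrm_def ip_def by (simp add: sum_nonneg)

lemma has_grad_unique: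
  assumes fin: "finite I" and x: "x \<in> sp I"
    and g1: "has_grad I f x g1" and g2: "has_grad I f x g2"
  shows "g1 = g2"
proof (rule ccontr)
  assume ne: "g1 \<noteq> g2"
  define h where "h = g1 - g2"
  have s1: "g1 \<in> sp I" and s2: "g2 \<in> sp I" using g1 g2 unfolding has_grad_def by auto
  then have hs: "h \<in> sp I" unfolding h_def sp_def by auto
  from ne obtain a where "h a \<noteq> 0" unfolding h_def by (auto simp: fun_eq_iff)
  with hs have aI: "a \<in> I" unfolding sp_def by auto
  have np: "0 < nrm I h" using nrm_pos[of I a h] fin aI \<open>h a \<noteq> 0\<close> by blast
  define e where "e = nrm I h / 4"
  have e: "e > 0" using np unfolding e_def by simp
  obtain d1 where d1: "d1 > 0" and D1: "\<forall>y\<in>sp I. nrm I (y - x) < d1 \<longrightarrow>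
        \<bar>f y - f x - ip I g1 (y - x)\<bar> \<le> e * nrm I (y - x)"
    using g1 e unfolding has_grad_def by blast
  obtain d2 where d2: "d2 > 0" and D2: "\<forall>y\<in>sp I. nrm I (y - x) < d2 \<longrightarrow>
        \<bar>f y - f x - ip I g2 (y - x)\<bar> \<le> e * nrm I (y - x)"
    using g2 e unfolding has_grad_def by blast
  define t where "t = min d1 d2 / (2 * nrm I h)"
  have t: "t > 0" using d1 d2 np unfolding t_def by simp
  define y where "y = (\<lambda>b. x b + t * h b)"
  have ys: "y \<in> sp I" using x hs unfolding y_def sp_def by auto
  have yx: "y - x = (\<lambda>b. t * h b)" unfolding y_def by (auto simp: fun_eq_iff)
  have ny: "nrm I (y - x) = t * nrm I h" unfolding yx nrm_scale using t by simp
  have "t * nrm I h = min d1 d2 / 2" unfolding t_def using np by simp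
  then have nyl: "nrm I (y - x) < d1" "nrm I (y - x) < d2" using ny d1 d2 by auto
  have A: "\<bar>f y - f x - t * ip I g1 h\<bar> \<le> e * (t * nrm I h)"
    using D1[rule_format, OF ys nyl(1)] unfolding ny unfolding yx ip_scale_right .
  have B: "\<bar>f y - f x - t * ip I g2 h\<bar> \<le> e * (t * nrm I h)"
    using D2[rule_format, OF ys nyl(2)] unfolding ny unfolding yx ip_scale_right .
  have "t * ip I h h = t * ip I g1 h - t * ip I g2 h"
    unfolding h_def[of] ip_diff_left by (simp add: algebra_simps h_def)
  then have "\<bar>t * ip I h h\<bar> \<le> 2 * e * (t * nrm I h)" using A B by linarith
  then have "t * (nrm I h)^2 \<le> t * ((nrm I h)^2 / 2)" using t np
    by (simp add: ip_self e_def power2_eq_square abs_mult)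
  then have "(nrm I h)^2 \<le> (nrm I h)^2 / 2" using t by simp
  then show False using np by simp
qed



fun rp :: "(nat \<Rightarrow> nat) \<Rightarrow> (nat \<times> nat \<times> nat \<Rightarrow> real) \<Rightarrow> nat \<Rightarrow> nat \<Rightarrow> (nat \<times> nat \<Rightarrow> real)" where
  "rp d W k 0 = idm (d k)"
| "rp d W k (Suc n) = mmul (d (Suc (k + n))) (d (k + n)) (d k) (layer W (Suc (k + n))) (rp d W k n)"

definition Tp where "Tp d W N k = rp d W k (N - k)"

lemma mmul_app: "mmul m p n A B (i, k) = (if i < m \<and> k < n then (\<Sum>l<p. A (i, l) * B (l, k)) else 0)"
  unfolding mmul_def by simp

lemma mmul_assoc: "mmul m p n A (mmul p q n B C) = mmul m q n (mmul m p q A B) C"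
proof (rule ext, clarify)
  fix i k
  show "mmul m p n A (mmul p q n B C) (i, k) = mmul m q n (mmul m p q A B) C (i, k)"
  proof (cases "i < m \<and> k < n")
    case True
    have 1: "(\<Sum>l<p. A (i, l) * mmul p q n B C (l, k)) = (\<Sum>l<p. \<Sum>r<q. A (i, l) * B (l, r) * C (r, k))"
      using True by (intro sum.cong) (auto simp: mmul_app sum_distrib_left mult_ac)
    have 2: "(\<Sum>r<q. mmul m p q A B (i, r) * C (r, k)) = (\<Sum>r<q. \<Sum>l<p. A (i, l) * B (l, r) * C (r, k))"
      using True by (intro sum.cong) (auto simp: mmul_app sum_distrib_right sum_distrib_left mult_ac)
    have "mmul m p n A (mmul p q n B C) (i, k) = (\<Sum>l<p. A (i, l) * mmul p q n B C (l, k))"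
      unfolding mmul_app[of m p n A] using True by simp
    also have "\<dots> = (\<Sum>r<q. mmul m p q A B (i, r) * C (r, k))"
      unfolding 1 2 by (rule sum.swap)
    also have "\<dots> = mmul m q n (mmul m p q A B) C (i, k)"
      unfolding mmul_app[of m q n] using True by simp
    finally show ?thesis .
  next
    case False then show ?thesis by (auto simp: mmul_app)
  qed
qed

lemma prodW_zero: "\<not> (i < d k \<and> l < d 0) \<Longrightarrow> prodW d W k (i, l) = 0"
  by (cases k) (auto simp: idm_def mmul_app)

lemma rp_zero: "\<not> (i < d (k + n) \<and> l < d k) \<Longrightarrow> rp d W k n (i, l) = 0"
  by (cases n) (auto simp: idm_def mmul_app)

lemma mmul_idm_left:
  assumes "\<And>i l. \<not> (i < m \<and> l < n) \<Longrightarrow> B (i, l) = 0"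
  shows "mmul m m n (idm m) B = B"
proof (rule ext, clarify)
  fix i l
  show "mmul m m n (idm m) B (i, l) = B (i, l)"
  proof (cases "i < m \<and> l < n")
    case True
    then have "(\<Sum>r<m. idm m (i, r) * B (r, l)) = (\<Sum>r<m. if r = i then B (i, l) else 0)"
      by (intro sum.cong) (auto simp: idm_def)
    also have "\<dots> = B (i, l)" using True by simp
    finally show ?thesis using True by (simp add: mmul_app)
  next
    case False then show ?thesis using assms by (auto simp: mmul_app)
  qed
qed

lemma mmul_idm_right_layer:
  "mmul m n n A (idm n) = mmul m m n (idm m) A"
proof (rule ext, clarify)
  fix i l
  show "mmul m n n A (idm n) (i, l) = mmul m m n (idm m) A (i, l)"
  proof (cases "i < m \<and> l < n")
    case True
    then have "(\<Sum>r<n. A (i, r) * idm n (r, l)) = (\<Sum>r<n. if r = l then A (i, l) else 0)"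
      by (intro sum.cong) (auto simp: idm_def)
    moreover have "(\<Sum>r<m. idm m (i, r) * A (r, l)) = (\<Sum>r<m. if r = i then A (i, l) else 0)"
      using True by (intro sum.cong) (auto simp: idm_def)
    ultimately show ?thesis using True by (simp add: mmul_app)
  next
    case False then show ?thesis by (auto simp: mmul_app)
  qed
qed

lemma rp_peel:
  "rp d W k (Suc n) = mmul (d (Suc k + n)) (d (Suc k)) (d k) (rp d W (Suc k) n) (layer W (Suc k))"
proof (induction n)
  case 0
  show ?case by (simp add: mmul_idm_right_layer)
next
  case (Suc n)
  have "rp d W k (Suc (Suc n)) = mmul (d (Suc (k + Suc n))) (d (k + Suc n)) (d k)
           (layer W (Suc (k + Suc n))) (rp d W k (Suc n))" by simp
  also have "\<dots> = mmul (d (Suc (k + Suc n))) (d (k + Suc n)) (d k)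
           (layer W (Suc (k + Suc n))) (mmul (d (Suc k + n)) (d (Suc k)) (d k) (rp d W (Suc k) n) (layer W (Suc k)))"
    using Suc by simp
  also have "\<dots> = mmul (d (Suc k + Suc n)) (d (Suc k)) (d k) (rp d W (Suc k) (Suc n)) (layer W (Suc k))"
    by (simp add: mmul_assoc)
  finally show ?case .
qed

lemma prodW_split: "prodW d W (k + n) = mmul (d (k + n)) (d k) (d 0) (rp d W k n) (prodW d W k)"
proof (induction n)
  case 0
  show ?case by (simp add: mmul_idm_left prodW_zero)
next
  case (Suc n)
  have "prodW d W (k + Suc n) = mmul (d (Suc (k + n))) (d (k + n)) (d 0) (layer W (Suc (k + n))) (prodW d W (k + n))"
    by simp
  also have "\<dots> = mmul (d (k + Suc n)) (d k) (d 0) (rp d W k (Suc n)) (prodW d W k)"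
    unfolding Suc by (simp add: mmul_assoc)
  finally show ?case .
qed

lemma layer_cong: "(\<And>i l. W (j, i, l) = W' (j, i, l)) \<Longrightarrow> layer W j = layer W' j"
  unfolding layer_def by auto

lemma rp_cong: assumes "\<And>j i l. k < j \<Longrightarrow> W (j, i, l) = W' (j, i, l)" shows "rp d W k n = rp d W' k n"
proof (induction n)
  case (Suc n)
  have "layer W (Suc (k+n)) = layer W' (Suc (k+n))" by (rule layer_cong) (simp add: assms)
  then show ?case using Suc by simp
qed simp

lemma prodW_cong: "(\<And>j i l. j \<le> k \<Longrightarrow> W (j, i, l) = W' (j, i, l)) \<Longrightarrow> prodW d W k = prodW d W' k"
proof (induction k)
  case (Suc k)
  have "layer W (Suc k) = layer W' (Suc k)" by (rule layer_cong) (simp add: Suc.prems)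
  then show ?case using Suc by simp
qed simp

lemma Tp_N: "Tp d W N N = idm (d N)" unfolding Tp_def by simp

lemma Tp_step: "k < N \<Longrightarrow> Tp d W N k = mmul (d N) (d (Suc k)) (d k) (Tp d W N (Suc k)) (layer W (Suc k))"
proof -
  assume kN: "k < N"
  define n where "n = N - Suc k"
  have n: "N - k = Suc n" "Suc k + n = N" using kN unfolding n_def by auto
  then have "N - Suc k = n" by simp
  then show ?thesis unfolding Tp_def n(1) rp_peel n(2) by simp
qed

lemma Tp_cong: "(\<And>j i l. k < j \<Longrightarrow> W (j, i, l) = W' (j, i, l)) \<Longrightarrow> Tp d W N k = Tp d W' N k"
  unfolding Tp_def by (rule rp_cong)

lemma prod_Tp: "k \<le> N \<Longrightarrow> prodW d W N = mmul (d N) (d k) (d 0) (Tp d W N k) (prodW d W k)"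
  using prodW_split[of d W k "N - k"] unfolding Tp_def by simp

lemma Tp_zero: "k \<le> N \<Longrightarrow> \<not> (i < d N \<and> l < d k) \<Longrightarrow> Tp d W N k (i, l) = 0"
  unfolding Tp_def using rp_zero[of i d k "N - k" l W] by simp

lemma layer_app: "layer W j (i, l) = W (j, i, l)" unfolding layer_def by simp



lemma hom_sys:
  fixes T :: "'r \<Rightarrow> 'c \<Rightarrow> real"
  assumes "finite R" "finite K" "card R < card K"
  shows "\<exists>z. (\<forall>a. a \<notin> K \<longrightarrow> z a = 0) \<and> (\<exists>a\<in>K. z a \<noteq> 0) \<and> (\<forall>i\<in>R. (\<Sum>a\<in>K. T i a * z a) = 0)"
  using assms
proof (induction R arbitrary: K T rule: finite_induct)
  case empty
  then obtain a where a: "a \<in> K" by (metis card.empty card_gt_0_iff equals0I)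
  show ?case by (rule exI[of _ "\<lambda>b. if b = a then 1 else 0"]) (use a in auto)
next
  case (insert r R)
  show ?case
  proof (cases "\<forall>a\<in>K. T r a = 0")
    case True
    have "card R < card K" using insert by simp
    then obtain z where z: "\<forall>a. a \<notin> K \<longrightarrow> z a = 0" "\<exists>a\<in>K. z a \<noteq> 0" "\<forall>i\<in>R. (\<Sum>a\<in>K. T i a * z a) = 0"
      using insert.IH[OF insert.prems(1)] by blast
    show ?thesis using z True by (intro exI[of _ z]) auto
  next
    case False
    then obtain q where q: "q \<in> K" "T r q \<noteq> 0" by auto
    define K' where "K' = K - {q}"
    have fK': "finite K'" using insert.prems unfolding K'_def by simp
    have cK': "card R < card K'" using insert q unfolding K'_def by (simp add: card_Diff_singleton)
    define T' where "T' = (\<lambda>i a. T i a - T i q * T r a / T r q)"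
    obtain z' where z': "\<forall>a. a \<notin> K' \<longrightarrow> z' a = 0" "\<exists>a\<in>K'. z' a \<noteq> 0"
        "\<forall>i\<in>R. (\<Sum>a\<in>K'. T' i a * z' a) = 0"
      using insert.IH[OF fK' cK', of T'] by blast
    define s where "s = (\<Sum>a\<in>K'. T r a * z' a)"
    define z where "z = (\<lambda>a. if a = q then - s / T r q else z' a)"
    have sumK: "(\<Sum>a\<in>K. T i a * z a) = (\<Sum>a\<in>K'. T i a * z' a) + T i q * z q" for i
    proof -
      have "(\<Sum>a\<in>K. T i a * z a) = T i q * z q + (\<Sum>a\<in>K'. T i a * z a)"
        unfolding K'_def using q insert.prems(1) by (simp add: sum.remove)
      moreover have "(\<Sum>a\<in>K'. T i a * z a) = (\<Sum>a\<in>K'. T i a * z' a)"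
        unfolding z_def K'_def by (intro sum.cong) auto
      ultimately show ?thesis by simp
    qed
    show ?thesis
    proof (intro exI[of _ z] conjI)
      show "\<forall>a. a \<notin> K \<longrightarrow> z a = 0" using z'(1) q unfolding z_def K'_def by auto
      show "\<exists>a\<in>K. z a \<noteq> 0" using z'(2) unfolding z_def K'_def by auto
      show "\<forall>i\<in>insert r R. (\<Sum>a\<in>K. T i a * z a) = 0"
      proof
        fix i assume "i \<in> insert r R"
        then consider "i = r" | "i \<in> R" by auto
        then show "(\<Sum>a\<in>K. T i a * z a) = 0"
        proof cases
          case 1
          then show ?thesis unfolding sumK using q unfolding z_def s_def by simp
        next
          case 2
          have "(\<Sum>a\<in>K'. T' i a * z' a) = (\<Sum>a\<in>K'. T i a * z' a) - T i q / T r q * s"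
            unfolding T'_def s_def by (simp add: algebra_simps sum_subtractf sum_distrib_left)
          then show ?thesis unfolding sumK using z'(3) 2 q unfolding z_def by (simp add: field_simps)
        qed
      qed
    qed
  qed
qed

lemma kernel_lemma:
  fixes T :: "nat \<times> nat \<Rightarrow> real" and w :: "nat \<Rightarrow> real"
  assumes "m \<le> dd" "i0 < m" "w i0 \<noteq> 0" "\<forall>a<dd. (\<Sum>i<m. w i * T (i, a)) = 0"
  shows "\<exists>z. (\<forall>a. \<not> a < dd \<longrightarrow> z a = 0) \<and> (\<exists>a<dd. z a \<noteq> 0) \<and> (\<forall>i<m. (\<Sum>a<dd. T (i, a) * z a) = 0)"
proof -
  define R where "R = {..<m} - {i0}"
  have cR: "card R < card {..<dd}" unfolding R_def using assms by (simp add: card_Diff_singleton)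
  obtain z where z: "\<forall>a. a \<notin> {..<dd} \<longrightarrow> z a = 0" "\<exists>a\<in>{..<dd}. z a \<noteq> 0"
      "\<forall>i\<in>R. (\<Sum>a\<in>{..<dd}. (\<lambda>i a. T (i, a)) i a * z a) = 0"
    using hom_sys[of R "{..<dd}" "\<lambda>i a. T (i, a)"] cR unfolding R_def by auto
  have rows: "(\<Sum>a<dd. T (i, a) * z a) = 0" if "i < m" "i \<noteq> i0" for i
    using z(3) that unfolding R_def by auto
  have "0 = (\<Sum>a<dd. (\<Sum>i<m. w i * T (i, a)) * z a)" using assms(4) by simp
  also have "\<dots> = (\<Sum>i<m. w i * (\<Sum>a<dd. T (i, a) * z a))"
    by (simp add: sum_distrib_left sum_distrib_right mult_ac sum.swap[of _ "{..<m}"])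
  also have "\<dots> = (\<Sum>i<m. if i = i0 then w i0 * (\<Sum>a<dd. T (i0, a) * z a) else 0)"
    by (intro sum.cong) (auto simp: rows)
  also have "\<dots> = w i0 * (\<Sum>a<dd. T (i0, a) * z a)" using assms(2) by simp
  finally have "(\<Sum>a<dd. T (i0, a) * z a) = 0" using assms(3) by simp
  then have "\<forall>i<m. (\<Sum>a<dd. T (i, a) * z a) = 0" using rows by metis
  then show ?thesis using z by auto
qed



definition G1 where "G1 d g W k i l = (\<Sum>q<d 0. g (i, q) * prodW d W k (l, q))"
definition M2 where "M2 d H g W k a q = (\<Sum>i<d (Suc H). Tp d W (Suc H) k (i, a) * g (i, q))"
definition Hf where "Hf d H g W j a b =
  (\<Sum>i<d (Suc H). \<Sum>q<d 0. g (i, q) * Tp d W (Suc H) j (i, a) * prodW d W (j - 1) (b, q))"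
definition Cond where "Cond d H g W \<longleftrightarrow> (\<exists>j\<in>{1..Suc H}. \<exists>a<d j. \<exists>b<d (j - 1). Hf d H g W j a b \<noteq> 0)"

lemma prodW_Suc_app: "l < d (Suc k) \<Longrightarrow> q < d 0 \<Longrightarrow>
   prodW d W (Suc k) (l, q) = (\<Sum>b<d k. W (Suc k, l, b) * prodW d W k (b, q))"
  by (simp add: mmul_app layer_app)

lemma Tp_step_app: "k < N \<Longrightarrow> i < d N \<Longrightarrow> b < d k \<Longrightarrow>
   Tp d W N k (i, b) = (\<Sum>a<d (Suc k). Tp d W N (Suc k) (i, a) * W (Suc k, a, b))"
  by (simp add: Tp_step mmul_app layer_app)

lemma G1_Suc: "l < d (Suc k) \<Longrightarrow> G1 d g W (Suc k) i l = (\<Sum>b<d k. W (Suc k, l, b) * G1 d g W k i b)"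
proof -
  assume l: "l < d (Suc k)"
  have "G1 d g W (Suc k) i l = (\<Sum>q<d 0. \<Sum>b<d k. W (Suc k, l, b) * (g (i, q) * prodW d W k (b, q)))"
    unfolding G1_def using l by (intro sum.cong) (simp_all add: prodW_Suc_app[of l d k, OF l] sum_distrib_left mult_ac del: prodW.simps)
  also have "\<dots> = (\<Sum>b<d k. \<Sum>q<d 0. W (Suc k, l, b) * (g (i, q) * prodW d W k (b, q)))"
    by (rule sum.swap)
  also have "\<dots> = (\<Sum>b<d k. W (Suc k, l, b) * G1 d g W k i b)"
    unfolding G1_def by (simp add: sum_distrib_left)
  finally show ?thesis .
qed

lemma Hf_G1: "Hf d H g W (Suc k) a b = (\<Sum>i<d (Suc H). Tp d W (Suc H) (Suc k) (i, a) * G1 d g W k i b)"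
  unfolding Hf_def G1_def by (simp add: sum_distrib_left mult_ac)

lemma M2_Suc: "k < Suc H \<Longrightarrow> b < d k \<Longrightarrow>
   M2 d H g W k b q = (\<Sum>a<d (Suc k). W (Suc k, a, b) * M2 d H g W (Suc k) a q)"
  unfolding M2_def
  by (simp add: Tp_step_app sum_distrib_left sum_distrib_right mult_ac sum.swap[of _ "{..<d (Suc k)}"])

lemma Hf_M2: "Hf d H g W (Suc k) a b = (\<Sum>q<d 0. M2 d H g W (Suc k) a q * prodW d W k (b, q))"
  unfolding Hf_def M2_def
  by (simp add: sum_distrib_left sum_distrib_right mult_ac sum.swap[of _ "{..<d 0}"])

lemma nrm_zero: "nrm I (\<lambda>_. 0) = 0" unfolding nrm_def ip_def by simp

lemma sum_idm_l: "a < n \<Longrightarrow> (\<Sum>i<n. idm n (i, a) * f i) = f a"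
proof -
  assume a: "a < n"
  have "(\<Sum>i<n. idm n (i, a) * f i) = (\<Sum>i<n. if i = a then f a else 0)"
    by (intro sum.cong) (auto simp: idm_def)
  then show ?thesis using a by simp
qed

lemma sum_idm_r: "a < n \<Longrightarrow> (\<Sum>i<n. f i * idm n (a, i)) = f a"
proof -
  assume a: "a < n"
  have "(\<Sum>i<n. f i * idm n (a, i)) = (\<Sum>i<n. if i = a then f a else 0)"
    by (intro sum.cong) (auto simp: idm_def)
  then show ?thesis using a by simp
qed

lemma sum_upd: fixes f h :: "nat \<Rightarrow> real" shows "l0 < n \<Longrightarrow> (\<Sum>b<n. (f b + e * (if b = l0 then c else 0)) * h b) = (\<Sum>b<n. f b * h b) + e * c * h l0"
proof -
  assume l0: "l0 < n"
  have "(\<Sum>b<n. (f b + e * (if b = l0 then c else 0)) * h b) = (\<Sum>b<n. f b * h b + (if b = l0 then e * c * h l0 else 0))"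
    by (intro sum.cong) (auto simp: algebra_simps)
  also have "\<dots> = (\<Sum>b<n. f b * h b) + (\<Sum>b<n. if b = l0 then e * c * h l0 else 0)"
    by (rule sum.distrib)
  finally have "(\<Sum>b<n. (f b + e * (if b = l0 then c else 0)) * h b) = (\<Sum>b<n. f b * h b) + (\<Sum>b<n. if b = l0 then e * c * h l0 else 0)" .
  then show ?thesis using l0 by simp
qed

lemma sum_upd2: fixes h f z :: "nat \<Rightarrow> real" shows "(\<Sum>a<n. h a * (f a + e * (if b = l0 then z a else 0))) = (\<Sum>a<n. h a * f a) + (if b = l0 then e * (\<Sum>a<n. h a * z a) else 0)"
  by (cases "b = l0") (simp_all add: distrib_left sum.distrib sum_distrib_left mult_ac)



lemma perturb_basic:
  fixes W Z :: "'i \<Rightarrow> real"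
  assumes W: "W \<in> sp I" and ZI: "\<forall>x. Z x \<noteq> 0 \<longrightarrow> x \<in> I" and e: "\<epsilon> > 0"
    and eta: "\<eta> = \<epsilon> / (2 * (nrm I Z + 1))"
  shows "(\<lambda>x. W x + \<eta> * Z x) \<in> sp I" "nrm I ((\<lambda>x. W x + \<eta> * Z x) - W) < \<epsilon> / 2" "\<eta> > 0"
proof -
  have n0: "nrm I Z \<ge> 0" by (rule nrm_nonneg)
  show ep: "\<eta> > 0" unfolding eta using e n0 by simp
  show "(\<lambda>x. W x + \<eta> * Z x) \<in> sp I" using W ZI unfolding sp_def by auto
  have "(\<lambda>x. W x + \<eta> * Z x) - W = (\<lambda>x. \<eta> * Z x)" by (simp add: fun_eq_iff)
  then have "nrm I ((\<lambda>x. W x + \<eta> * Z x) - W) = \<eta> * nrm I Z" using ep by (simp add: nrm_scale)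
  also have "\<dots> = \<epsilon> * (nrm I Z / (2 * (nrm I Z + 1)))" unfolding eta by simp
  also have "\<dots> < \<epsilon> * (1 / 2)"
    using e n0 by (intro mult_strict_left_mono) (simp_all add: field_simps)
  finally show "nrm I ((\<lambda>x. W x + \<eta> * Z x) - W) < \<epsilon> / 2" by simp
qed

lemma self_diff: "W - W = (\<lambda>_. 0::real)" by (simp add: fun_eq_iff)

lemma case1:
  assumes widths: "\<forall>j\<in>{1..H}. d (Suc H) \<le> d j" and kH: "k \<le> H"
  shows "\<forall>W \<epsilon>. W \<in> sp (PI d H) \<longrightarrow> \<epsilon> > 0 \<longrightarrow> (\<exists>i<d (Suc H). \<exists>l<d k. G1 d g W k i l \<noteq> 0) \<longrightarrow>
     (\<exists>W'. W' \<in> sp (PI d H) \<and> nrm (PI d H) (W' - W) < \<epsilon> \<and> (\<forall>j i l. j \<le> k \<longrightarrow> W' (j, i, l) = W (j, i, l))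
        \<and> Tp d W' (Suc H) k = Tp d W (Suc H) k \<and> Cond d H g W')"
  using kH
proof (induction k rule: inc_induct)
  case base
  show ?case
  proof (intro allI impI)
    fix W and \<epsilon> :: real
    assume W: "W \<in> sp (PI d H)" "\<epsilon> > 0" and "\<exists>i<d (Suc H). \<exists>l<d H. G1 d g W H i l \<noteq> 0"
    then obtain i0 l0 where i0: "i0 < d (Suc H)" "l0 < d H" "G1 d g W H i0 l0 \<noteq> 0" by auto
    have hf: "Hf d H g W (Suc H) i0 l0 = G1 d g W H i0 l0"
      unfolding Hf_G1 Tp_N using sum_idm_l[OF i0(1)] by simp
    have "\<exists>a<d (Suc H). \<exists>b<d H. Hf d H g W (Suc H) a b \<noteq> 0" using i0 hf by metis
    then have "Cond d H g W" unfolding Cond_def by (intro bexI[of _ "Suc H"]) auto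
    then show "\<exists>W'. W' \<in> sp (PI d H) \<and> nrm (PI d H) (W' - W) < \<epsilon> \<and> (\<forall>j i l. j \<le> H \<longrightarrow> W' (j, i, l) = W (j, i, l))
        \<and> Tp d W' (Suc H) H = Tp d W (Suc H) H \<and> Cond d H g W'"
      using W by (intro exI[of _ W]) (simp add: self_diff nrm_zero)
  qed
next
  case (step n)
  note IH = step.IH
  have nH: "n < Suc H" using step.hyps by simp
  show ?case
  proof (intro allI impI)
    fix W and \<epsilon> :: real
    assume W: "W \<in> sp (PI d H)" "\<epsilon> > 0" and "\<exists>i<d (Suc H). \<exists>l<d n. G1 d g W n i l \<noteq> 0"
    then obtain i0 l0 where i0: "i0 < d (Suc H)" "l0 < d n" "G1 d g W n i0 l0 \<noteq> 0" by auto
    define T where "T = Tp d W (Suc H) (Suc n)"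
    show "\<exists>W'. W' \<in> sp (PI d H) \<and> nrm (PI d H) (W' - W) < \<epsilon> \<and> (\<forall>j i l. j \<le> n \<longrightarrow> W' (j, i, l) = W (j, i, l))
        \<and> Tp d W' (Suc H) n = Tp d W (Suc H) n \<and> Cond d H g W'"
    proof (cases "\<exists>i<d (Suc H). \<exists>l<d (Suc n). G1 d g W (Suc n) i l \<noteq> 0")
      case A: True
      obtain W' where W': "W' \<in> sp (PI d H)" "nrm (PI d H) (W' - W) < \<epsilon>"
        "\<forall>j i l. j \<le> Suc n \<longrightarrow> W' (j, i, l) = W (j, i, l)"
        "Tp d W' (Suc H) (Suc n) = Tp d W (Suc H) (Suc n)" "Cond d H g W'"
        using IH[rule_format, OF W(1) W(2) A] by blast
      have "layer W' (Suc n) = layer W (Suc n)" by (rule layer_cong) (simp add: W'(3))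
      then have "Tp d W' (Suc H) n = Tp d W (Suc H) n"
        unfolding Tp_step[OF nH, of d W'] Tp_step[OF nH, of d W] W'(4) by simp
      then show ?thesis using W' by (intro exI[of _ W']) auto
    next
      case notA: False
      show ?thesis
      proof (cases "\<exists>a<d (Suc n). \<exists>b<d n. Hf d H g W (Suc n) a b \<noteq> 0")
        case True
        then have "Cond d H g W" unfolding Cond_def using nH by (intro bexI[of _ "Suc n"]) auto
        then show ?thesis using W by (intro exI[of _ W]) (simp add: self_diff nrm_zero)
      next
        case notB: False
        have hk: "\<forall>a<d (Suc n). (\<Sum>i<d (Suc H). G1 d g W n i l0 * T (i, a)) = 0"
        proof (intro allI impI)
          fix a assume a: "a < d (Suc n)"
          have "Hf d H g W (Suc n) a l0 = 0" using notB a i0 by auto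
          then show "(\<Sum>i<d (Suc H). G1 d g W n i l0 * T (i, a)) = 0"
            unfolding Hf_G1 T_def by (simp add: mult_ac)
        qed
        have dle: "d (Suc H) \<le> d (Suc n)" using widths step.hyps by auto
        obtain z where z: "\<forall>a. \<not> a < d (Suc n) \<longrightarrow> z a = 0" "\<exists>a<d (Suc n). z a \<noteq> 0"
            "\<forall>i<d (Suc H). (\<Sum>a<d (Suc n). T (i, a) * z a) = 0"
          using kernel_lemma[of "d (Suc H)" "d (Suc n)" i0 "\<lambda>i. G1 d g W n i l0" T] dle i0 hk by blast
        define Z where "Z = (\<lambda>x::nat\<times>nat\<times>nat. if fst x = Suc n \<and> snd (snd x) = l0 then z (fst (snd x)) else 0)"
        have ZI: "\<forall>x. Z x \<noteq> 0 \<longrightarrow> x \<in> PI d H"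
        proof (intro allI impI)
          fix x assume "Z x \<noteq> 0"
          then obtain a where x: "x = (Suc n, a, l0)" "z a \<noteq> 0" unfolding Z_def
            by (cases x) (auto split: if_splits)
          then have "a < d (Suc n)" using z(1) by metis
          then show "x \<in> PI d H" unfolding PI_def x using i0 step.hyps by auto
        qed
        define \<eta> where "\<eta> = \<epsilon> / (2 * (nrm (PI d H) Z + 1))"
        define W2 where "W2 = (\<lambda>x. W x + \<eta> * Z x)"
        have W2: "W2 \<in> sp (PI d H)" "nrm (PI d H) (W2 - W) < \<epsilon> / 2" "\<eta> > 0"
          using perturb_basic[OF W(1) ZI W(2) \<eta>_def] unfolding W2_def by auto
        have W2app: "W2 (j, a, b) = W (j, a, b) + \<eta> * (if j = Suc n \<and> b = l0 then z a else 0)" for j a b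
          unfolding W2_def Z_def by simp
        have W2same: "j \<noteq> Suc n \<Longrightarrow> W2 (j, a, b) = W (j, a, b)" for j a b
          unfolding W2app by simp
        have pW2: "prodW d W2 n = prodW d W n" by (rule prodW_cong) (simp add: W2same)
        have G1W2: "G1 d g W2 n = G1 d g W n" unfolding G1_def[abs_def] pW2 ..
        obtain a1 where a1: "a1 < d (Suc n)" "z a1 \<noteq> 0" using z(2) by blast
        have "G1 d g W2 (Suc n) i0 a1 = (\<Sum>b<d n. W2 (Suc n, a1, b) * G1 d g W n i0 b)"
          unfolding G1_Suc[of a1 d n, OF a1(1)] G1W2 ..
        also have "\<dots> = (\<Sum>b<d n. (W (Suc n, a1, b) + \<eta> * (if b = l0 then z a1 else 0)) * G1 d g W n i0 b)"
          unfolding W2app by simp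
        also have "\<dots> = G1 d g W (Suc n) i0 a1 + \<eta> * z a1 * G1 d g W n i0 l0"
          unfolding sum_upd[OF i0(2)] G1_Suc[of a1 d n, OF a1(1)] ..
        also have "\<dots> = \<eta> * z a1 * G1 d g W n i0 l0" using notA a1 i0 by auto
        finally have "G1 d g W2 (Suc n) i0 a1 \<noteq> 0" using W2(3) a1 i0 by simp
        then have hyp: "\<exists>i<d (Suc H). \<exists>l<d (Suc n). G1 d g W2 (Suc n) i l \<noteq> 0" using i0 a1 by blast
        have e2: "\<epsilon> / 2 > 0" using W(2) by simp
        obtain W' where W': "W' \<in> sp (PI d H)" "nrm (PI d H) (W' - W2) < \<epsilon> / 2"
          "\<forall>j i l. j \<le> Suc n \<longrightarrow> W' (j, i, l) = W2 (j, i, l)"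
          "Tp d W' (Suc H) (Suc n) = Tp d W2 (Suc H) (Suc n)" "Cond d H g W'"
          using IH[rule_format, OF W2(1) e2 hyp] by blast
        have "nrm (PI d H) (W' - W) \<le> nrm (PI d H) (W' - W2) + nrm (PI d H) (W2 - W)"
          by (rule nrm_diff_tri)
        then have nW': "nrm (PI d H) (W' - W) < \<epsilon>" using W'(2) W2(2) by simp
        have agree: "\<forall>j i l. j \<le> n \<longrightarrow> W' (j, i, l) = W (j, i, l)" using W'(3) W2same by simp
        have "layer W' (Suc n) = layer W2 (Suc n)" by (rule layer_cong) (simp add: W'(3))
        then have TW'W2: "Tp d W' (Suc H) n = Tp d W2 (Suc H) n"
          unfolding Tp_step[OF nH, of d W'] Tp_step[OF nH, of d W2] W'(4) by simp
        have TW2: "Tp d W2 (Suc H) (Suc n) = T" unfolding T_def by (rule Tp_cong) (simp add: W2same)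
        have "Tp d W2 (Suc H) n = Tp d W (Suc H) n"
        proof (rule ext, clarify)
          fix i b
          show "Tp d W2 (Suc H) n (i, b) = Tp d W (Suc H) n (i, b)"
          proof (cases "i < d (Suc H) \<and> b < d n")
            case True
            have "Tp d W2 (Suc H) n (i, b) = (\<Sum>a<d (Suc n). Tp d W2 (Suc H) (Suc n) (i, a) * W2 (Suc n, a, b))"
              by (rule Tp_step_app) (use nH True in auto)
            also have "\<dots> = (\<Sum>a<d (Suc n). T (i, a) * (W (Suc n, a, b) + \<eta> * (if b = l0 then z a else 0)))"
              unfolding TW2 W2app by simp
            also have "\<dots> = (\<Sum>a<d (Suc n). T (i, a) * W (Suc n, a, b))"
              unfolding sum_upd2 using z(3) True by simp
            also have "\<dots> = Tp d W (Suc H) n (i, b)"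
              unfolding T_def by (rule Tp_step_app[symmetric]) (use nH True in auto)
            finally show ?thesis .
          next
            case False
            then show ?thesis using Tp_zero[of n "Suc H" i d] nH by simp
          qed
        qed
        then show ?thesis using W' nW' agree TW'W2 by (intro exI[of _ W']) auto
      qed
    qed
  qed
qed



lemma sum_upd3: fixes f h z :: "nat \<Rightarrow> real" shows
  "(\<Sum>b<n. (f b + e * (if a = a0 then z b else 0)) * h b) = (\<Sum>b<n. f b * h b) + (if a = a0 then e * (\<Sum>b<n. z b * h b) else 0)"
proof (cases "a = a0")
  case True
  have "(\<Sum>b<n. (f b + e * z b) * h b) = (\<Sum>b<n. f b * h b + e * (z b * h b))"
    by (intro sum.cong) (auto simp: algebra_simps)
  then show ?thesis using True by (simp add: sum.distrib sum_distrib_left)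
qed simp

lemma case2:
  assumes widths: "\<forall>j\<in>{1..H}. d 0 \<le> d j" and k1: "1 \<le> k" and kH: "k \<le> Suc H"
  shows "\<forall>W \<epsilon>. W \<in> sp (PI d H) \<longrightarrow> \<epsilon> > 0 \<longrightarrow> (\<exists>a<d k. \<exists>q<d 0. M2 d H g W k a q \<noteq> 0) \<longrightarrow>
     (\<exists>W'. W' \<in> sp (PI d H) \<and> nrm (PI d H) (W' - W) < \<epsilon> \<and> (\<forall>j i l. k < j \<longrightarrow> W' (j, i, l) = W (j, i, l))
        \<and> prodW d W' k = prodW d W k \<and> Cond d H g W')"
  using k1 kH
proof (induction k rule: dec_induct)
  case base
  show ?case
  proof (intro allI impI)
    fix W and \<epsilon> :: real
    assume W: "W \<in> sp (PI d H)" "\<epsilon> > 0" and "\<exists>a<d 1. \<exists>q<d 0. M2 d H g W 1 a q \<noteq> 0"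
    then obtain a0 q0 where a0: "a0 < d 1" "q0 < d 0" "M2 d H g W 1 a0 q0 \<noteq> 0" by auto
    have hf: "Hf d H g W 1 a0 q0 = M2 d H g W 1 a0 q0"
      using Hf_M2[of d H g W 0 a0 q0] sum_idm_r[OF a0(2), of "\<lambda>q. M2 d H g W 1 a0 q"] by simp
    have "\<exists>a<d 1. \<exists>b<d 0. Hf d H g W 1 a b \<noteq> 0" using a0 hf by metis
    then have "Cond d H g W" unfolding Cond_def by (intro bexI[of _ 1]) auto
    then show "\<exists>W'. W' \<in> sp (PI d H) \<and> nrm (PI d H) (W' - W) < \<epsilon> \<and> (\<forall>j i l. 1 < j \<longrightarrow> W' (j, i, l) = W (j, i, l))
        \<and> prodW d W' 1 = prodW d W 1 \<and> Cond d H g W'"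
      using W by (intro exI[of _ W]) (simp add: self_diff nrm_zero)
  qed
next
  case (step n)
  have nH: "n < Suc H" using step.prems by simp
  have n1: "1 \<le> n" using step.hyps by simp
  note IH = step.IH[OF less_imp_le[OF nH]]
  show ?case
  proof (intro allI impI)
    fix W and \<epsilon> :: real
    assume W: "W \<in> sp (PI d H)" "\<epsilon> > 0" and "\<exists>a<d (Suc n). \<exists>q<d 0. M2 d H g W (Suc n) a q \<noteq> 0"
    then obtain a0 q0 where a0: "a0 < d (Suc n)" "q0 < d 0" "M2 d H g W (Suc n) a0 q0 \<noteq> 0" by auto
    define V where "V = prodW d W n"
    show "\<exists>W'. W' \<in> sp (PI d H) \<and> nrm (PI d H) (W' - W) < \<epsilon> \<and> (\<forall>j i l. Suc n < j \<longrightarrow> W' (j, i, l) = W (j, i, l))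
        \<and> prodW d W' (Suc n) = prodW d W (Suc n) \<and> Cond d H g W'"
    proof (cases "\<exists>b<d n. \<exists>q<d 0. M2 d H g W n b q \<noteq> 0")
      case A: True
      obtain W' where W': "W' \<in> sp (PI d H)" "nrm (PI d H) (W' - W) < \<epsilon>"
        "\<forall>j i l. n < j \<longrightarrow> W' (j, i, l) = W (j, i, l)"
        "prodW d W' n = prodW d W n" "Cond d H g W'"
        using IH[rule_format, OF W(1) W(2) A] by blast
      have "layer W' (Suc n) = layer W (Suc n)" by (rule layer_cong) (simp add: W'(3))
      then have "prodW d W' (Suc n) = prodW d W (Suc n)" using W'(4) by simp
      then show ?thesis using W' by (intro exI[of _ W']) auto
    next
      case notA: False
      show ?thesis
      proof (cases "\<exists>a<d (Suc n). \<exists>b<d n. Hf d H g W (Suc n) a b \<noteq> 0")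
        case True
        then have "Cond d H g W" unfolding Cond_def using nH by (intro bexI[of _ "Suc n"]) auto
        then show ?thesis using W by (intro exI[of _ W]) (simp add: self_diff nrm_zero)
      next
        case notB: False
        have hk: "\<forall>b<d n. (\<Sum>q<d 0. M2 d H g W (Suc n) a0 q * (\<lambda>p. V (snd p, fst p)) (q, b)) = 0"
        proof (intro allI impI)
          fix b assume b: "b < d n"
          have "Hf d H g W (Suc n) a0 b = 0" using notB a0 b by auto
          then show "(\<Sum>q<d 0. M2 d H g W (Suc n) a0 q * (\<lambda>p. V (snd p, fst p)) (q, b)) = 0"
            unfolding Hf_M2 V_def by simp
        qed
        have dle: "d 0 \<le> d n" using widths n1 nH by auto
        obtain z where z: "\<forall>b. \<not> b < d n \<longrightarrow> z b = 0" "\<exists>b<d n. z b \<noteq> 0"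
            "\<forall>q<d 0. (\<Sum>b<d n. (\<lambda>p. V (snd p, fst p)) (q, b) * z b) = 0"
          using kernel_lemma[of "d 0" "d n" q0 "\<lambda>q. M2 d H g W (Suc n) a0 q" "\<lambda>p. V (snd p, fst p)"] dle a0 hk
          by blast
        have zV: "(\<Sum>b<d n. z b * V (b, q)) = 0" if "q < d 0" for q
          using z(3) that by (simp add: mult_ac)
        define Z where "Z = (\<lambda>x::nat\<times>nat\<times>nat. if fst x = Suc n \<and> fst (snd x) = a0 then z (snd (snd x)) else 0)"
        have ZI: "\<forall>x. Z x \<noteq> 0 \<longrightarrow> x \<in> PI d H"
        proof (intro allI impI)
          fix x assume "Z x \<noteq> 0"
          then obtain b where x: "x = (Suc n, a0, b)" "z b \<noteq> 0" unfolding Z_def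
            by (cases x) (auto split: if_splits)
          then have "b < d n" using z(1) by metis
          then show "x \<in> PI d H" unfolding PI_def x using a0 nH by auto
        qed
        define \<eta> where "\<eta> = \<epsilon> / (2 * (nrm (PI d H) Z + 1))"
        define W2 where "W2 = (\<lambda>x. W x + \<eta> * Z x)"
        have W2: "W2 \<in> sp (PI d H)" "nrm (PI d H) (W2 - W) < \<epsilon> / 2" "\<eta> > 0"
          using perturb_basic[OF W(1) ZI W(2) \<eta>_def] unfolding W2_def by auto
        have W2app: "W2 (j, a, b) = W (j, a, b) + \<eta> * (if j = Suc n \<and> a = a0 then z b else 0)" for j a b
          unfolding W2_def Z_def by simp
        have W2same: "j \<noteq> Suc n \<Longrightarrow> W2 (j, a, b) = W (j, a, b)" for j a b
          unfolding W2app by simp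
        have pW2: "prodW d W2 n = prodW d W n" by (rule prodW_cong) (simp add: W2same)
        have TW2: "Tp d W2 (Suc H) (Suc n) = Tp d W (Suc H) (Suc n)" by (rule Tp_cong) (simp add: W2same)
        have M2W2: "M2 d H g W2 (Suc n) = M2 d H g W (Suc n)" unfolding M2_def[abs_def] TW2 ..
        obtain b1 where b1: "b1 < d n" "z b1 \<noteq> 0" using z(2) by blast
        have "M2 d H g W2 n b1 q0 = (\<Sum>a<d (Suc n). W2 (Suc n, a, b1) * M2 d H g W (Suc n) a q0)"
          unfolding M2_Suc[of n H b1 d, OF nH b1(1)] M2W2 ..
        also have "\<dots> = (\<Sum>a<d (Suc n). (W (Suc n, a, b1) + \<eta> * (if a = a0 then z b1 else 0)) * M2 d H g W (Suc n) a q0)"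
          unfolding W2app by simp
        also have "\<dots> = M2 d H g W n b1 q0 + \<eta> * z b1 * M2 d H g W (Suc n) a0 q0"
          unfolding sum_upd[OF a0(1)] M2_Suc[of n H b1 d, OF nH b1(1)] ..
        also have "\<dots> = \<eta> * z b1 * M2 d H g W (Suc n) a0 q0" using notA b1 a0 by auto
        finally have "M2 d H g W2 n b1 q0 \<noteq> 0" using W2(3) b1 a0 by simp
        then have hyp: "\<exists>b<d n. \<exists>q<d 0. M2 d H g W2 n b q \<noteq> 0" using a0 b1 by blast
        have e2: "\<epsilon> / 2 > 0" using W(2) by simp
        obtain W' where W': "W' \<in> sp (PI d H)" "nrm (PI d H) (W' - W2) < \<epsilon> / 2"
          "\<forall>j i l. n < j \<longrightarrow> W' (j, i, l) = W2 (j, i, l)"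
          "prodW d W' n = prodW d W2 n" "Cond d H g W'"
          using IH[rule_format, OF W2(1) e2 hyp] by blast
        have "nrm (PI d H) (W' - W) \<le> nrm (PI d H) (W' - W2) + nrm (PI d H) (W2 - W)"
          by (rule nrm_diff_tri)
        then have nW': "nrm (PI d H) (W' - W) < \<epsilon>" using W'(2) W2(2) by simp
        have agree: "\<forall>j i l. Suc n < j \<longrightarrow> W' (j, i, l) = W (j, i, l)" using W'(3) W2same by simp
        have "layer W' (Suc n) = layer W2 (Suc n)" by (rule layer_cong) (simp add: W'(3))
        then have PW'W2: "prodW d W' (Suc n) = prodW d W2 (Suc n)" using W'(4) by simp
        have "prodW d W2 (Suc n) = prodW d W (Suc n)"
        proof (rule ext, clarify)
          fix a q
          show "prodW d W2 (Suc n) (a, q) = prodW d W (Suc n) (a, q)"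
          proof (cases "a < d (Suc n) \<and> q < d 0")
            case True
            have "prodW d W2 (Suc n) (a, q) = (\<Sum>b<d n. W2 (Suc n, a, b) * prodW d W2 n (b, q))"
              by (rule prodW_Suc_app) (use True in auto)
            also have "\<dots> = (\<Sum>b<d n. (W (Suc n, a, b) + \<eta> * (if a = a0 then z b else 0)) * V (b, q))"
              unfolding pW2 W2app V_def by simp
            also have "\<dots> = (\<Sum>b<d n. W (Suc n, a, b) * V (b, q))"
              unfolding sum_upd3 using zV True by simp
            also have "\<dots> = prodW d W (Suc n) (a, q)"
              unfolding V_def by (rule prodW_Suc_app[symmetric]) (use True in auto)
            finally show ?thesis .
          next
            case False
            then show ?thesis using prodW_zero[of a d "Suc n" q] by simp
          qed
        qed
        then show ?thesis using W' nW' agree PW'W2 by (intro exI[of _ W']) auto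
      qed
    qed
  qed
qed



lemma MI_prod: "MI m n = {..<m} \<times> {..<n}" unfolding MI_def by auto

lemma core:
  assumes widths: "\<forall>j\<in>{1..H}. min (d 0) (d (Suc H)) \<le> d j"
    and W: "W \<in> sp (PI d H)" and g: "g \<in> sp (MI (d (Suc H)) (d 0))" "g \<noteq> (\<lambda>_. 0)" and e: "\<epsilon> > 0"
  shows "\<exists>W'. W' \<in> sp (PI d H) \<and> nrm (PI d H) (W' - W) < \<epsilon> \<and> prodW d W' (Suc H) = prodW d W (Suc H) \<and> Cond d H g W'"
proof -
  obtain x where "g x \<noteq> 0" using g(2) by (auto simp: fun_eq_iff)
  then obtain i0 q0 where gi: "g (i0, q0) \<noteq> 0" by (cases x) auto
  then have iq: "i0 < d (Suc H)" "q0 < d 0" using g(1) unfolding sp_def MI_def by auto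
  show ?thesis
  proof (cases "d (Suc H) \<le> d 0")
    case True
    then have w1: "\<forall>j\<in>{1..H}. d (Suc H) \<le> d j" using widths by auto
    have "G1 d g W 0 i0 q0 = g (i0, q0)" unfolding G1_def using sum_idm_r[OF iq(2)] by simp
    then have hyp: "\<exists>i<d (Suc H). \<exists>l<d 0. G1 d g W 0 i l \<noteq> 0" using iq gi by metis
    obtain W' where W': "W' \<in> sp (PI d H)" "nrm (PI d H) (W' - W) < \<epsilon>"
        "Tp d W' (Suc H) 0 = Tp d W (Suc H) 0" "Cond d H g W'"
      using case1[OF w1, of 0 g, rule_format, OF _ W e hyp] by blast
    have "prodW d W' (Suc H) = prodW d W (Suc H)"
      using prod_Tp[of 0 "Suc H" d W'] prod_Tp[of 0 "Suc H" d W] W'(3) by simp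
    then show ?thesis using W' by blast
  next
    case False
    then have w2: "\<forall>j\<in>{1..H}. d 0 \<le> d j" using widths by auto
    have "M2 d H g W (Suc H) i0 q0 = g (i0, q0)" unfolding M2_def Tp_N using sum_idm_l[OF iq(1)] by simp
    then have hyp: "\<exists>a<d (Suc H). \<exists>q<d 0. M2 d H g W (Suc H) a q \<noteq> 0" using iq gi by metis
    show ?thesis
      using case2[OF w2, of "Suc H" g, rule_format, OF _ _ W e hyp] by auto
  qed
qed

lemma perturb_prod:
  assumes j: "1 \<le> j" "j \<le> Suc H" and ab: "a < d j" "b < d (j - 1)"
  shows "prodW d (\<lambda>x. W x + (if x = (j, a, b) then c else 0)) (Suc H) =
    (\<lambda>x. prodW d W (Suc H) x + c * (if fst x < d (Suc H) \<and> snd x < d 0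
        then Tp d W (Suc H) j (fst x, a) * prodW d W (j - 1) (b, snd x) else 0))"
proof -
  define Vc where "Vc = (\<lambda>x. W x + (if x = (j, a, b) then c else 0))"
  obtain j0 where j0: "j = Suc j0" using j by (cases j) auto
  have TV: "Tp d Vc (Suc H) j = Tp d W (Suc H) j" by (rule Tp_cong) (auto simp: Vc_def)
  have PV: "prodW d Vc j0 = prodW d W j0" by (rule prodW_cong) (auto simp: Vc_def j0)
  have PVj: "prodW d Vc j (l, q) = prodW d W j (l, q) + (if l = a then c * prodW d W j0 (b, q) else 0)"
    if "l < d j" "q < d 0" for l q
  proof -
    have "prodW d Vc j (l, q) = (\<Sum>r<d j0. Vc (j, l, r) * prodW d Vc j0 (r, q))"
      unfolding j0 by (rule prodW_Suc_app) (use that j0 in auto)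
    also have "\<dots> = (\<Sum>r<d j0. W (j, l, r) * prodW d W j0 (r, q) + (if l = a \<and> r = b then c * prodW d W j0 (b, q) else 0))"
      unfolding PV unfolding Vc_def by (intro sum.cong) (auto simp: algebra_simps)
    also have "\<dots> = (\<Sum>r<d j0. W (j, l, r) * prodW d W j0 (r, q)) + (if l = a then c * prodW d W j0 (b, q) else 0)"
      using ab j0 by (simp add: sum.distrib)
    also have "(\<Sum>r<d j0. W (j, l, r) * prodW d W j0 (r, q)) = prodW d W j (l, q)"
      unfolding j0 by (rule prodW_Suc_app[symmetric]) (use that j0 in auto)
    finally show ?thesis .
  qed
  have "prodW d Vc (Suc H) = (\<lambda>x. prodW d W (Suc H) x + c * (if fst x < d (Suc H) \<and> snd x < d 0
        then Tp d W (Suc H) j (fst x, a) * prodW d W (j - 1) (b, snd x) else 0))"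
  proof (rule ext)
    fix x :: "nat \<times> nat"
    obtain i q where x: "x = (i, q)" by (cases x)
    show "prodW d Vc (Suc H) x = prodW d W (Suc H) x + c * (if fst x < d (Suc H) \<and> snd x < d 0
        then Tp d W (Suc H) j (fst x, a) * prodW d W (j - 1) (b, snd x) else 0)"
    proof (cases "i < d (Suc H) \<and> q < d 0")
      case True
      have "prodW d Vc (Suc H) (i, q) = (\<Sum>l<d j. Tp d W (Suc H) j (i, l) * prodW d Vc j (l, q))"
        unfolding prod_Tp[OF j(2), of d Vc] TV using True by (simp add: mmul_app)
      also have "\<dots> = (\<Sum>l<d j. Tp d W (Suc H) j (i, l) * prodW d W j (l, q) + (if l = a then c * Tp d W (Suc H) j (i, a) * prodW d W j0 (b, q) else 0))"
        using True by (intro sum.cong) (auto simp: PVj algebra_simps)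
      also have "\<dots> = (\<Sum>l<d j. Tp d W (Suc H) j (i, l) * prodW d W j (l, q)) + c * Tp d W (Suc H) j (i, a) * prodW d W j0 (b, q)"
        using ab by (simp add: sum.distrib)
      also have "(\<Sum>l<d j. Tp d W (Suc H) j (i, l) * prodW d W j (l, q)) = prodW d W (Suc H) (i, q)"
        unfolding prod_Tp[OF j(2), of d W] using True by (simp add: mmul_app)
      finally show ?thesis using True j0 x by simp
    next
      case False
      then show ?thesis using prodW_zero[of i d "Suc H" q] x by auto
    qed
  qed
  then show ?thesis unfolding Vc_def .
qed



lemma descent:
  assumes widths: "\<forall>j\<in>{1..H}. min (d 0) (d (Suc H)) \<le> d j"
    and W: "W \<in> sp (PI d H)"
    and hg: "has_grad (MI (d (Suc H)) (d 0)) l0 (prodW d W (Suc H)) g" and gne: "g \<noteq> (\<lambda>_. 0)"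
    and dl: "\<delta> > 0" and s: "s = 1 \<or> s = (-1::real)"
  shows "\<exists>V\<in>sp (PI d H). nrm (PI d H) (V - W) < \<delta> \<and> s * (l0 (prodW d V (Suc H)) - l0 (prodW d W (Suc H))) < 0"
proof -
  let ?I = "MI (d (Suc H)) (d 0)"
  define P where "P = prodW d W (Suc H)"
  have gs: "g \<in> sp ?I" using hg unfolding has_grad_def by auto
  have e2: "\<delta> / 2 > 0" using dl by simp
  obtain W' where W': "W' \<in> sp (PI d H)" "nrm (PI d H) (W' - W) < \<delta> / 2" "prodW d W' (Suc H) = P" "Cond d H g W'"
    using core[OF widths W gs gne e2] unfolding P_def by auto
  from W'(4) obtain j a b where jab: "j \<in> {1..Suc H}" "a < d j" "b < d (j - 1)" "Hf d H g W' j a b \<noteq> 0"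
    unfolding Cond_def by blast
  define h where "h = Hf d H g W' j a b"
  have h0: "h \<noteq> 0" using jab unfolding h_def by simp
  define D where "D = (\<lambda>x::nat\<times>nat. if fst x < d (Suc H) \<and> snd x < d 0
        then Tp d W' (Suc H) j (fst x, a) * prodW d W' (j - 1) (b, snd x) else 0)"
  have "ip ?I g D = (\<Sum>i<d (Suc H). \<Sum>q<d 0. g (i, q) * D (i, q))"
    unfolding ip_def MI_prod sum.cartesian_product by (simp add: case_prod_unfold)
  also have "\<dots> = h" unfolding h_def Hf_def D_def by (intro sum.cong) (auto simp: mult_ac)
  finally have ipD: "ip ?I g D = h" .
  define nD where "nD = nrm ?I D"
  have nD0: "nD \<ge> 0" unfolding nD_def by (rule nrm_nonneg)
  define e0 where "e0 = \<bar>h\<bar> / (2 * (nD + 1))"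
  have e0: "e0 > 0" using h0 nD0 unfolding e0_def by simp
  obtain \<delta>1 where d1: "\<delta>1 > 0" and D1: "\<forall>y\<in>sp ?I. nrm ?I (y - P) < \<delta>1 \<longrightarrow>
        \<bar>l0 y - l0 P - ip ?I g (y - P)\<bar> \<le> e0 * nrm ?I (y - P)"
    using hg e0 unfolding has_grad_def P_def by blast
  define t where "t = min (\<delta>1 / (nD + 1)) (\<delta> / 2) / 2"
  have t0: "t > 0" using d1 dl nD0 unfolding t_def by simp
  have tnD: "t * nD < \<delta>1"
  proof -
    have "t \<le> \<delta>1 / (nD + 1) / 2" unfolding t_def by (intro divide_right_mono) auto
    then have "t * (nD + 1) \<le> \<delta>1 / 2" using nD0 by (simp add: field_simps)
    then show ?thesis using t0 d1 by (simp add: algebra_simps)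
  qed
  have td: "t < \<delta> / 2" using dl unfolding t_def by simp
  define c where "c = - s * sgn h * t"
  have ac: "\<bar>c\<bar> = t" using s h0 t0 unfolding c_def by (auto simp: abs_mult sgn_if)
  have sch: "s * (c * h) = - t * \<bar>h\<bar>" using s h0 unfolding c_def by (auto simp: sgn_if)
  define Vc where "Vc = (\<lambda>x. W' x + (if x = (j, a, b) then c else 0))"
  have jj: "1 \<le> j" "j \<le> Suc H" using jab by auto
  have y: "prodW d Vc (Suc H) = (\<lambda>x. P x + c * D x)"
    unfolding Vc_def perturb_prod[OF jj jab(2,3)] W'(3) D_def by simp
  have ys: "prodW d Vc (Suc H) \<in> sp ?I"
    unfolding sp_def MI_def using prodW_zero[of _ d "Suc H" _ Vc] by auto
  have yP: "prodW d Vc (Suc H) - P = (\<lambda>x. c * D x)" unfolding y by (simp add: fun_eq_iff)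
  have nyP: "nrm ?I (prodW d Vc (Suc H) - P) = t * nD" unfolding yP nrm_scale ac nD_def ..
  have ipy: "ip ?I g (prodW d Vc (Suc H) - P) = c * h" unfolding yP ip_scale_right ipD ..
  have bnd: "\<bar>l0 (prodW d Vc (Suc H)) - l0 P - c * h\<bar> \<le> e0 * (t * nD)"
    using D1[rule_format, OF ys] tnD unfolding nyP ipy by simp
  have "e0 * (t * nD) = t * (\<bar>h\<bar> * (nD / (2 * (nD + 1))))" unfolding e0_def by (simp add: field_simps)
  also have "\<dots> \<le> t * (\<bar>h\<bar> * (1 / 2))"
    using t0 nD0 by (intro mult_left_mono) (simp_all add: field_simps)
  finally have bnd2: "e0 * (t * nD) \<le> t * \<bar>h\<bar> / 2" by simp
  define Y0 where "Y0 = l0 (prodW d Vc (Suc H))"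
  have "\<bar>s * (Y0 - l0 P - c * h)\<bar> \<le> t * \<bar>h\<bar> / 2"
    using bnd bnd2 s unfolding Y0_def by (auto simp: abs_mult)
  moreover have "s * (Y0 - l0 P) - s * (c * h) = s * (Y0 - l0 P - c * h)" by (simp add: algebra_simps)
  ultimately have "s * (Y0 - l0 P) \<le> s * (c * h) + t * \<bar>h\<bar> / 2"
    by (simp add: abs_le_iff)
  then have "s * (l0 (prodW d Vc (Suc H)) - l0 P) \<le> s * (c * h) + t * \<bar>h\<bar> / 2"
    unfolding Y0_def .
  also have "\<dots> < 0" unfolding sch using t0 h0 by simp
  finally have less: "s * (l0 (prodW d Vc (Suc H)) - l0 P) < 0" .
  have jabPI: "(j, a, b) \<in> PI d H" unfolding PI_def using jab by auto
  have Vcs: "Vc \<in> sp (PI d H)" using W'(1) jabPI unfolding Vc_def sp_def by auto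
  have "Vc - W' = (\<lambda>x. if x = (j, a, b) then c else 0)" unfolding Vc_def by (simp add: fun_eq_iff)
  then have "nrm (PI d H) (Vc - W') \<le> t" using nrm_delta[OF PI_finite, where p = "(j, a, b)" and c = c] ac by simp
  moreover have "nrm (PI d H) (Vc - W) \<le> nrm (PI d H) (Vc - W') + nrm (PI d H) (W' - W)" by (rule nrm_diff_tri)
  ultimately have "nrm (PI d H) (Vc - W) < \<delta>" using W'(2) td by simp
  then show ?thesis using Vcs less unfolding P_def by blast
qed

lemma grad_has:
  assumes "finite I" "x \<in> sp I" "differentiable_at_sp I f x"
  shows "has_grad I f x (grad I f x)"
proof -
  obtain g where g: "has_grad I f x g" using assms(3) unfolding differentiable_at_sp_def by blast
  have "\<exists>!g. has_grad I f x g" using g has_grad_unique[OF assms(1,2)] by blast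
  then show ?thesis unfolding grad_def by (rule theI')
qed



theorem corollary2:
  fixes H dx dy :: nat and d :: "nat \<Rightarrow> nat"
    and l0 :: "(nat \<times> nat \<Rightarrow> real) \<Rightarrow> real"
  assumes "H \<ge> 1"
    and "d 0 = dx" and "d (H + 1) = dy"
    and "\<forall>j\<in>{1..H}. d j \<ge> min dx dy"
    and "\<forall>M\<in>sp (MI dy dx). differentiable_at_sp (MI dy dx) l0 M"
  shows
    "((\<forall>M. critical (MI dy dx) l0 M \<longrightarrow> global_min (MI dy dx) l0 M) \<longrightarrow>
       (\<forall>W. critical (PI d H) (\<lambda>V. l0 (prodW d V (H + 1))) W \<longrightarrow>
          (grad (MI dy dx) l0 (prodW d W (H + 1)) \<noteq> (\<lambda>_. 0) \<longrightarrow>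
             saddle (PI d H) (\<lambda>V. l0 (prodW d V (H + 1))) W) \<and>
          (grad (MI dy dx) l0 (prodW d W (H + 1)) = (\<lambda>_. 0) \<longrightarrow>
             global_min (PI d H) (\<lambda>V. l0 (prodW d V (H + 1))) W)))
   \<and>
     ((\<forall>M. critical (MI dy dx) l0 M \<longrightarrow> global_max (MI dy dx) l0 M) \<longrightarrow>
       (\<forall>W. critical (PI d H) (\<lambda>V. l0 (prodW d V (H + 1))) W \<longrightarrow>
          (grad (MI dy dx) l0 (prodW d W (H + 1)) \<noteq> (\<lambda>_. 0) \<longrightarrow>
             saddle (PI d H) (\<lambda>V. l0 (prodW d V (H + 1))) W) \<and>
          (grad (MI dy dx) l0 (prodW d W (H + 1)) = (\<lambda>_. 0) \<longrightarrow>
             global_max (PI d H) (\<lambda>V. l0 (prodW d V (H + 1))) W)))"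
proof -
  have N: "H + 1 = Suc H" by simp
  have dy: "d (Suc H) = dy" using assms(3) by simp
  have w: "\<forall>j\<in>{1..H}. min (d 0) (d (Suc H)) \<le> d j" using assms(2,4) dy by simp
  let ?I = "MI dy dx"
  let ?L = "\<lambda>V. l0 (prodW d V (Suc H))"
  have Ieq: "?I = MI (d (Suc H)) (d 0)" using assms(2) dy by simp
  have Pin: "prodW d V (Suc H) \<in> sp ?I" for V
    unfolding sp_def MI_def using prodW_zero[of _ d "Suc H" _ V] assms(2) dy by auto
  have hgr: "has_grad ?I l0 (prodW d V (Suc H)) (grad ?I l0 (prodW d V (Suc H)))" for V
    using grad_has[OF MI_finite Pin] assms(5) Pin by blast
  have sad: "saddle (PI d H) ?L W"
    if cr: "critical (PI d H) ?L W" and gn: "grad ?I l0 (prodW d W (Suc H)) \<noteq> (\<lambda>_. 0)" for W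
  proof -
    have Ws: "W \<in> sp (PI d H)" using cr unfolding critical_def by simp
    have hg: "has_grad (MI (d (Suc H)) (d 0)) l0 (prodW d W (Suc H)) (grad ?I l0 (prodW d W (Suc H)))"
      using hgr[of W] unfolding Ieq .
    have "\<not> local_min (PI d H) ?L W"
    proof
      assume "local_min (PI d H) ?L W"
      then obtain \<delta> where dl: "\<delta> > 0" and mn: "\<forall>y\<in>sp (PI d H). nrm (PI d H) (y - W) < \<delta> \<longrightarrow> ?L W \<le> ?L y"
        unfolding local_min_def by blast
      obtain V where "V \<in> sp (PI d H)" "nrm (PI d H) (V - W) < \<delta>" "1 * (?L V - ?L W) < 0"
        using descent[OF w Ws hg gn dl, of 1] by auto
      then show False using mn by force
    qed
    moreover have "\<not> local_max (PI d H) ?L W"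
    proof
      assume "local_max (PI d H) ?L W"
      then obtain \<delta> where dl: "\<delta> > 0" and mx: "\<forall>y\<in>sp (PI d H). nrm (PI d H) (y - W) < \<delta> \<longrightarrow> ?L y \<le> ?L W"
        unfolding local_max_def by blast
      obtain V where "V \<in> sp (PI d H)" "nrm (PI d H) (V - W) < \<delta>" "(-1) * (?L V - ?L W) < 0"
        using descent[OF w Ws hg gn dl, of "-1"] by auto
      then show False using mx by force
    qed
    ultimately show ?thesis using cr unfolding saddle_def by simp
  qed
  have crit0: "critical ?I l0 (prodW d W (Suc H))"
    if "grad ?I l0 (prodW d W (Suc H)) = (\<lambda>_. 0)" for W
    using hgr[of W] Pin[of W] that unfolding critical_def by simp
  have gmin: "global_min (PI d H) ?L W"
    if h: "\<forall>M. critical ?I l0 M \<longrightarrow> global_min ?I l0 M" and cr: "critical (PI d H) ?L W"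
      and g0: "grad ?I l0 (prodW d W (Suc H)) = (\<lambda>_. 0)" for W
  proof -
    have "global_min ?I l0 (prodW d W (Suc H))" using h crit0[OF g0] by blast
    then have "\<forall>V. ?L W \<le> ?L V" using Pin unfolding global_min_def by blast
    then show ?thesis using cr unfolding global_min_def critical_def by blast
  qed
  have gmax: "global_max (PI d H) ?L W"
    if h: "\<forall>M. critical ?I l0 M \<longrightarrow> global_max ?I l0 M" and cr: "critical (PI d H) ?L W"
      and g0: "grad ?I l0 (prodW d W (Suc H)) = (\<lambda>_. 0)" for W
  proof -
    have "global_max ?I l0 (prodW d W (Suc H))" using h crit0[OF g0] by blast
    then have "\<forall>V. ?L V \<le> ?L W" using Pin unfolding global_max_def by blast
    then show ?thesis using cr unfolding global_max_def critical_def by blast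
  qed
  show ?thesis unfolding N using sad gmin gmax by blast
qed

end
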